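(* Let $\mathcal X$ be a separable metric space with its Borel $\sigma$-field, fix a Markov kernel $P_{Y|X}$, and let $\theta(\cdot)$ be a regression functional such that the map $P_X\mapsto\theta(P_{Y|X}\otimes P_X)$, on acceptable regressor distributions, is continuous with respect to weak convergence of distributions. Fix an acceptable $P_X$ and put $P=P_{Y|X}\otimes P_X$. For a finite regressor dataset $\mathbf X=(x_1,\dots,x_N)$ (any $N$) with acceptable empirical distribution $\hat P_X=\frac1N\sum_{i=1}^N\delta_{x_i}$, define $\theta(\mathbf X):=\theta(P_{Y|X}\otimes\hat P_X)$. Then $\theta(\cdot)$ is well-specified for $P_{Y|X}$ if and only if $\theta(\mathbf X)-\theta(P)=0$ for every such acceptable dataset $\mathbf X$.
   Context: A joint distribution $P$ of $(Y,X)$ on $\mathcal Y\times\mathcal X$ is written $P=P_{Y|X}\otimes P_X$, meaning $P(dy,dx)=P_{Y|X=x}(dy)P_X(dx)$, with $P_X$ the marginal of $X$ and $P_{Y|X}$ a Markov kernel defined for every $x$. There is a designated set of "acceptable" regressor distributions, with $P_{Y|X}\otimes P_X$ in the domain of $\theta$ for acceptable $P_X$. Standing assumption: for every acceptable $P_X$, the empirical distribution of $N$ iid draws from $P_X$ is acceptable with probability one for all sufficiently large $N$. $\theta$ is well-specified for $P_{Y|X}$ if $\theta(P_{Y|X}\otimes P_X)=\theta(P_{Y|X}\otimes P_X')$ for all acceptable $P_X,P_X'$. *)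

theory Defs
  imports "HOL-Probability.Probability"
begin

text \<open>The joint distribution  P_{Y|X} (x) P_X  on  Y \<times> X : draw x from P_X, then y from the kernel at x.\<close>
definition joint :: "'y measure \<Rightarrow> ('x::topological_space \<Rightarrow> 'y measure) \<Rightarrow> 'x measure \<Rightarrow> ('y \<times> 'x) measure" where
  "joint MY K PX = PX \<bind> (\<lambda>x. distr (K x) (MY \<Otimes>\<^sub>M borel) (\<lambda>y. (y, x)))"

text \<open>Empirical distribution of a (nonempty) finite dataset, as a measure on the Borel sets.\<close>
definition emp :: "'x::topological_space list \<Rightarrow> 'x measure" where
  "emp xs = distr (measure_pmf (pmf_of_multiset (mset xs))) borel id"

definition weak_conv_seq :: "(nat \<Rightarrow> 'x::topological_space measure) \<Rightarrow> 'x measure \<Rightarrow> bool" where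
  "weak_conv_seq \<mu>s \<mu> \<longleftrightarrow>
     (\<forall>f::'x \<Rightarrow> real. continuous_on UNIV f \<and> bounded (range f) \<longrightarrow>
        (\<lambda>n. \<integral>x. f x \<partial>\<mu>s n) \<longlonglongrightarrow> (\<integral>x. f x \<partial>\<mu>))"

definition well_specified ::
  "(('y \<times> 'x) measure \<Rightarrow> 'b) \<Rightarrow> 'y measure \<Rightarrow> ('x::topological_space \<Rightarrow> 'y measure) \<Rightarrow> ('x measure \<Rightarrow> bool) \<Rightarrow> bool" where
  "well_specified \<theta> MY K acc \<longleftrightarrow>
     (\<forall>PX PX'. acc PX \<longrightarrow> acc PX' \<longrightarrow> \<theta> (joint MY K PX) = \<theta> (joint MY K PX'))"

end

theory Submission
  imports Defs
begin

lemma emp_basic: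
  assumes "xs \<noteq> []"
  shows "prob_space (emp xs)" "sets (emp xs) = sets borel"
  using assms unfolding emp_def
  by (auto intro!: prob_space.prob_space_distr prob_space_measure_pmf)

lemma measure_pmf_of_multiset:
  assumes "M \<noteq> {#}"
  shows "measure (measure_pmf (pmf_of_multiset M)) A = size (filter_mset (\<lambda>x. x \<in> A) M) / size M"
proof -
  have "measure (measure_pmf (pmf_of_multiset M)) A = measure (measure_pmf (pmf_of_multiset M)) (A \<inter> set_mset M)"
    using assms by (metis measure_Int_set_pmf set_pmf_of_multiset)
  also have "\<dots> = (\<Sum>x\<in>A \<inter> set_mset M. count M x / size M)"
    using assms by (subst measure_measure_pmf_finite) auto
  also have "\<dots> = (\<Sum>x\<in>A \<inter> set_mset M. real (count M x)) / size M"
    by (simp add: sum_divide_distrib)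
  also have "(\<Sum>x\<in>A \<inter> set_mset M. real (count M x)) = size (filter_mset (\<lambda>x. x \<in> A) M)"
  proof -
    have "size (filter_mset (\<lambda>x. x \<in> A) M) = (\<Sum>x\<in>set_mset (filter_mset (\<lambda>x. x \<in> A) M). count (filter_mset (\<lambda>x. x \<in> A) M) x)"
      by (rule size_multiset_overloaded_eq)
    also have "\<dots> = (\<Sum>x\<in>A \<inter> set_mset M. count M x)"
      by (intro sum.cong) auto
    finally show ?thesis by simp
  qed
  finally show ?thesis .
qed


lemma indep_components:
  assumes "prob_space \<mu>"
  shows "prob_space.indep_vars (PiM UNIV (\<lambda>_::nat. \<mu>)) (\<lambda>_. \<mu>) (\<lambda>i \<omega>. \<omega> i) UNIV"
proof -
  interpret P: prob_space "PiM UNIV (\<lambda>_::nat. \<mu>)" by (rule prob_space_PiM) (use assms in auto)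
  have "distr (PiM UNIV (\<lambda>_::nat. \<mu>)) (PiM UNIV (\<lambda>_. \<mu>)) (\<lambda>x. \<lambda>i\<in>UNIV. x i) = PiM UNIV (\<lambda>_. \<mu>)"
  proof -
    have eq: "(\<lambda>x. \<lambda>i\<in>UNIV. x i) = (\<lambda>x::nat\<Rightarrow>_. x)" by (auto simp: restrict_def)
    show ?thesis by (simp only: eq distr_id)
  qed
  also have "\<dots> = PiM UNIV (\<lambda>i. distr (PiM UNIV (\<lambda>_::nat. \<mu>)) \<mu> (\<lambda>\<omega>. \<omega> i))"
  proof -
    have "(\<lambda>i. distr (PiM UNIV (\<lambda>_::nat. \<mu>)) \<mu> (\<lambda>\<omega>. \<omega> i)) = (\<lambda>_. \<mu>)"
      using distr_PiM_component[of "UNIV::nat set" "\<lambda>_. \<mu>"] assms by auto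
    then show ?thesis by simp
  qed
  finally show ?thesis
    by (subst P.indep_vars_iff_distr_eq_PiM) auto
qed

lemma integral_component:
  assumes "prob_space \<mu>" and g: "g \<in> borel_measurable \<mu>"
  shows "(\<integral>\<omega>. g (\<omega> i) \<partial>PiM UNIV (\<lambda>_::nat. \<mu>)) = (\<integral>x. (g x :: real) \<partial>\<mu>)"
proof -
  have "(\<integral>x. g x \<partial>\<mu>) = (\<integral>x. g x \<partial>distr (PiM UNIV (\<lambda>_::nat. \<mu>)) \<mu> (\<lambda>\<omega>. \<omega> i))"
    using distr_PiM_component[of "UNIV::nat set" "\<lambda>_. \<mu>" i] assms by simp
  also have "\<dots> = (\<integral>\<omega>. g (\<omega> i) \<partial>PiM UNIV (\<lambda>_::nat. \<mu>))"
    by (rule integral_distr) (auto simp: g)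
  finally show ?thesis by simp
qed

lemma slln_indicator:
  assumes mu: "prob_space \<nu>" and V: "V \<in> sets \<nu>"
  shows "AE \<omega> in PiM UNIV (\<lambda>_::nat. \<nu>).
           (\<lambda>N. (\<Sum>i<N. indicator V (\<omega> i)) / real N) \<longlonglongrightarrow> measure \<nu> V"
proof -
  let ?\<Omega> = "PiM UNIV (\<lambda>_::nat. \<nu>)"
  interpret P: prob_space ?\<Omega> by (rule prob_space_PiM) (use mu in auto)
  define p where "p = measure \<nu> V"
  define S where "S N \<omega> = (\<Sum>i<N. indicator V (\<omega> i) :: real)" for N :: nat and \<omega> :: "nat \<Rightarrow> _"
  have Smeas[measurable]: "S N \<in> borel_measurable ?\<Omega>" for N
    unfolding S_def using V by measurable
  have ind: "P.indep_vars (\<lambda>_. borel) (\<lambda>i \<omega>. indicator V (\<omega> i) :: real) UNIV"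
    using P.indep_vars_compose2[OF indep_components[OF mu], of "\<lambda>i x. indicator V x :: real" "\<lambda>_. borel"] V
    by auto
  have expct: "P.expectation (\<lambda>\<omega>. indicator V (\<omega> i) :: real) = p" for i
    using integral_component[OF mu, of "indicator V" i] V by (simp add: p_def)
  have key: "AE \<omega> in ?\<Omega>. eventually (\<lambda>N. \<bar>S N \<omega> / N - p\<bar> < \<epsilon>) sequentially" if \<epsilon>: "\<epsilon> > 0" for \<epsilon>
  proof -
    define A where "A N = (if N = 0 then {} else {\<omega>\<in>space ?\<Omega>. \<bar>S N \<omega> - N * p\<bar> \<ge> N * \<epsilon>})" for N
    have Ameas[measurable]: "A N \<in> P.events" for N
      unfolding A_def by (cases "N = 0") simp_all
    have bound: "measure ?\<Omega> (A N) \<le> 2 * exp (-2 * \<epsilon>\<^sup>2) ^ N" for N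
    proof (cases "N = 0")
      case True then show ?thesis by (simp add: A_def)
    next
      case False
      interpret H: Hoeffding_ineq ?\<Omega> "{..<N}" "\<lambda>i \<omega>. indicator V (\<omega> i) :: real" "\<lambda>_. 0" "\<lambda>_. 1" "\<Sum>i<N. P.expectation (\<lambda>\<omega>. indicator V (\<omega> i) :: real)"
      proof unfold_locales
        show "P.indep_vars (\<lambda>_. borel) (\<lambda>i \<omega>. indicator V (\<omega> i) :: real) {..<N}"
          by (rule P.indep_vars_subset[OF ind]) simp
      qed (simp_all add: indicator_def atLeast0LessThan)
      have hm: "(\<Sum>i<N. P.expectation (\<lambda>\<omega>. indicator V (\<omega> i) :: real)) = N * p" by (simp add: expct)
      have "P.prob {x\<in>space ?\<Omega>. \<bar>(\<Sum>i\<in>{..<N}. indicator V (x i)) - (\<Sum>i<N. P.expectation (\<lambda>\<omega>. indicator V (\<omega> i) :: real))\<bar> \<ge> N * \<epsilon>} \<le> 2 * exp (-2 * (N*\<epsilon>)\<^sup>2 / (\<Sum>i\<in>{..<N}. (1 - 0)\<^sup>2))"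
        using False \<epsilon> by (intro H.Hoeffding_ineq_abs_ge) auto
      also have "-2 * (N*\<epsilon>)\<^sup>2 / (\<Sum>i\<in>{..<N}. (1 - 0)\<^sup>2) = N * (-2 * \<epsilon>\<^sup>2)"
        using False by (simp add: power2_eq_square)
      also have "exp (N * (-2 * \<epsilon>\<^sup>2)) = exp (-2 * \<epsilon>\<^sup>2) ^ N"
        by (rule exp_of_nat_mult)
      finally show ?thesis
        using False hm by (simp add: A_def S_def)
    qed
    have "summable (\<lambda>N. 2 * exp (-2 * \<epsilon>\<^sup>2) ^ N)"
      using \<epsilon> by (intro summable_mult summable_geometric) auto
    then have "summable (\<lambda>N. measure ?\<Omega> (A N))"
      by (rule summable_comparison_test') (use bound in auto)
    then have "AE \<omega> in ?\<Omega>. eventually (\<lambda>N. \<omega> \<in> space ?\<Omega> - A N) sequentially"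
      by (intro borel_cantelli_AE1) (auto simp: P.emeasure_eq_measure)
    then show ?thesis
    proof (rule AE_mp, intro AE_I2 impI)
      fix \<omega> assume \<omega>: "\<omega> \<in> space ?\<Omega>" and ev: "eventually (\<lambda>N. \<omega> \<in> space ?\<Omega> - A N) sequentially"
      show "eventually (\<lambda>N. \<bar>S N \<omega> / N - p\<bar> < \<epsilon>) sequentially"
        using eventually_conj[OF ev eventually_gt_at_top[of 0]]
      proof (rule eventually_mono)
        fix N :: nat assume "\<omega> \<in> space ?\<Omega> - A N \<and> 0 < N"
        then have "\<bar>S N \<omega> - N * p\<bar> < N * \<epsilon>" and N: "N > 0" using \<omega> by (auto simp: A_def)
        moreover have "S N \<omega> / N - p = (S N \<omega> - N * p) / N" using N by (simp add: field_simps)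
        ultimately show "\<bar>S N \<omega> / N - p\<bar> < \<epsilon>"
          using N by (simp add: abs_divide divide_less_eq mult.commute)
      qed
    qed
  qed
  have "AE \<omega> in ?\<Omega>. \<forall>m::nat. eventually (\<lambda>N. \<bar>S N \<omega> / N - p\<bar> < 1 / Suc m) sequentially"
    by (subst AE_all_countable) (auto intro: key)
  then show ?thesis
  proof (rule AE_mp, intro AE_I2 impI)
    fix \<omega> assume all: "\<forall>m::nat. eventually (\<lambda>N. \<bar>S N \<omega> / N - p\<bar> < 1 / Suc m) sequentially"
    show "(\<lambda>N. (\<Sum>i<N. indicator V (\<omega> i)) / real N) \<longlonglongrightarrow> measure \<nu> V"
      unfolding tendsto_iff
    proof (intro allI impI)
      fix r :: real assume "r > 0"
      then obtain m where m: "inverse (real (Suc m)) < r" using reals_Archimedean by blast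
      show "eventually (\<lambda>N. dist ((\<Sum>i<N. indicator V (\<omega> i)) / real N) (measure \<nu> V) < r) sequentially"
        using all[rule_format, of m]
      proof (rule eventually_mono)
        fix N assume "\<bar>S N \<omega> / N - p\<bar> < 1 / Suc m"
        then show "dist ((\<Sum>i<N. indicator V (\<omega> i)) / real N) (measure \<nu> V) < r"
          using m by (simp add: S_def p_def dist_real_def inverse_eq_divide)
      qed
    qed
  qed
qed



lemma count_bound:
  fixes c :: real and k :: nat
  assumes "0 < c" "c < k"
  shows "real (card {j\<in>{1..k}. real j < c}) \<le> c" "c \<le> real (card {j\<in>{1..k}. real j < c}) + 1"
proof -
  define n where "n = nat (\<lceil>c\<rceil> - 1)"
  have c1: "\<lceil>c\<rceil> \<ge> 1" using assms by (simp add: one_le_ceiling) 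
  have "{j\<in>{1..k}. real j < c} = {1..n}"
  proof (intro set_eqI iffI)
    fix j assume j: "j \<in> {j\<in>{1..k}. real j < c}"
    then have "int j < \<lceil>c\<rceil>" by (simp add: less_ceiling_iff)
    then show "j \<in> {1..n}" using j c1 by (auto simp: n_def)
  next
    fix j assume j: "j \<in> {1..n}"
    then have "int j < \<lceil>c\<rceil>" using c1 by (auto simp: n_def)
    then have "real j < c" by (simp add: less_ceiling_iff)
    moreover have "real j < k" using \<open>real j < c\<close> assms by simp
    ultimately show "j \<in> {j\<in>{1..k}. real j < c}" using j by auto
  qed
  then have card: "real (card {j\<in>{1..k}. real j < c}) = real_of_int (\<lceil>c\<rceil> - 1)"
    using c1 by (simp add: n_def)
  show "real (card {j\<in>{1..k}. real j < c}) \<le> c" unfolding card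
    using ceiling_correct[of c] by linarith
  show "c \<le> real (card {j\<in>{1..k}. real j < c}) + 1" unfolding card
    using le_of_int_ceiling[of c] by simp
qed

lemma layer_bounds:
  fixes g :: "'x::topological_space \<Rightarrow> real" and L :: "'x measure" and k :: nat
  assumes L: "prob_space L" "sets L = sets borel"
    and g: "continuous_on UNIV g" and B: "\<And>x. \<bar>g x\<bar> \<le> B" and k: "k > 0"
  defines "a \<equiv> - B - 1" and "M \<equiv> 2 * B + 2"
  shows "M / real k * (\<Sum>j\<in>{1..k}. measure L {x. a + real j * M / real k < g x}) \<le> (\<integral>x. g x \<partial>L) - a"
    and "(\<integral>x. g x \<partial>L) - a \<le> M / real k * (\<Sum>j\<in>{1..k}. measure L {x. a + real j * M / real k < g x}) + M / real k"
proof -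
  interpret prob_space L by (rule L)
  have B0: "B \<ge> 0" using B[of undefined] by simp
  have M0: "M > 0" using B0 by (simp add: M_def)
  have opn: "{x. a + real j * M / real k < g x} \<in> sets L" for j :: nat
  proof -
    have "open {x. (\<lambda>_. a + real j * M / real k) x < g x}"
      by (rule open_Collect_less) (auto intro: g continuous_intros)
    then show ?thesis using L(2) by simp
  qed
  have gm: "g \<in> borel_measurable L"
    using L(2) borel_measurable_continuous_onI[OF g] measurable_cong_sets by blast
  have intg: "integrable L g"
    by (rule integrable_const_bound[where B=B]) (use B gm in auto)
  define h where "h x = M / real k * (\<Sum>j\<in>{1..k}. indicator {x. a + real j * M / real k < g x} x)" for x
  have inth: "integrable L h"
    unfolding h_def using opn by (intro integrable_mult_right integrable_sum integrable_real_indicator) (auto simp: emeasure_eq_measure)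
  have ih: "(\<integral>x. h x \<partial>L) = M / real k * (\<Sum>j\<in>{1..k}. measure L {x. a + real j * M / real k < g x})"
    unfolding h_def using opn
    by (simp add: integral_sum integrable_real_indicator emeasure_eq_measure)
  have pw: "h x \<le> g x - a \<and> g x - a \<le> h x + M / real k" for x
  proof -
    define c where "c = (g x - a) * real k / M"
    have ga: "0 < g x - a" "g x - a < M" using B[of x] by (auto simp: a_def M_def)
    have c0: "0 < c" "c < k"
    proof -
      show "0 < c" using ga M0 k by (simp add: c_def)
      have "(g x - a) * real k < M * real k" using ga k by (intro mult_strict_right_mono) auto
      then show "c < k" using M0 by (simp add: c_def divide_less_eq mult.commute)
    qed
    have "(\<Sum>j\<in>{1..k}. indicator {x. a + real j * M / real k < g x} x :: real) = card {j\<in>{1..k}. real j < c}"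
    proof -
      have "(\<Sum>j\<in>{1..k}. indicator {x. a + real j * M / real k < g x} x :: real) = (\<Sum>j\<in>{j\<in>{1..k}. real j < c}. 1)"
      proof -
        have "indicator {x. a + real j * M / real k < g x} x = (if real j < c then 1 else 0 :: real)" for j
        proof -
          have "(a + real j * M / real k < g x) \<longleftrightarrow> real j < c"
            using M0 k by (simp add: c_def field_simps)
          then show ?thesis by (simp add: indicator_def)
        qed
        then have "(\<Sum>j\<in>{1..k}. indicator {x. a + real j * M / real k < g x} x :: real) = (\<Sum>j\<in>{1..k}. if real j < c then 1 else 0)"
          by simp
        also have "\<dots> = (\<Sum>j\<in>{j\<in>{1..k}. real j < c}. 1)"
          by (rule sum.inter_filter[symmetric]) simp
        finally show ?thesis .
      qed
      then show ?thesis by simp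
    qed
    then have hx: "h x = M / real k * card {j\<in>{1..k}. real j < c}" by (simp add: h_def)
    have gx: "g x - a = M / real k * c" using M0 k by (simp add: c_def field_simps)
    define n where "n = real (card {j\<in>{1..k}. real j < c})"
    have Mk: "M / real k \<ge> 0" using M0 by simp
    have 1: "M / real k * n \<le> M / real k * c"
      by (rule mult_left_mono) (use count_bound(1)[OF c0] Mk in \<open>auto simp: n_def\<close>)
    have 2: "M / real k * c \<le> M / real k * (n + 1)"
      by (rule mult_left_mono) (use count_bound(2)[OF c0] Mk in \<open>auto simp: n_def\<close>)
    show ?thesis using 1 2 unfolding hx gx n_def[symmetric] by (simp add: algebra_simps add_divide_distrib)
  qed
  have "(\<integral>x. h x \<partial>L) \<le> (\<integral>x. g x - a \<partial>L)"
    by (rule integral_mono) (use inth intg pw in auto)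
  then show "M / real k * (\<Sum>j\<in>{1..k}. measure L {x. a + real j * M / real k < g x}) \<le> (\<integral>x. g x \<partial>L) - a"
    using intg by (simp add: ih prob_space)
  have "(\<integral>x. g x - a \<partial>L) \<le> (\<integral>x. h x + M / real k \<partial>L)"
    by (rule integral_mono) (use inth intg pw in auto)
  then show "(\<integral>x. g x \<partial>L) - a \<le> M / real k * (\<Sum>j\<in>{1..k}. measure L {x. a + real j * M / real k < g x}) + M / real k"
    using intg inth by (simp add: ih prob_space)
qed

lemma lower_conv:
  fixes \<nu>s :: "nat \<Rightarrow> 'x::topological_space measure" and g :: "'x \<Rightarrow> real"
  assumes probs: "\<And>n. prob_space (\<nu>s n)" "\<And>n. sets (\<nu>s n) = sets borel"
    and pr: "prob_space \<nu>" "sets \<nu> = sets borel"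
    and opn: "\<And>U e. open U \<Longrightarrow> e > 0 \<Longrightarrow> eventually (\<lambda>n. measure (\<nu>s n) U > measure \<nu> U - e) sequentially"
    and g: "continuous_on UNIV g" and B: "\<And>x. \<bar>g x\<bar> \<le> B" and \<epsilon>: "\<epsilon> > 0"
  shows "eventually (\<lambda>n. (\<integral>x. g x \<partial>\<nu>s n) > (\<integral>x. g x \<partial>\<nu>) - \<epsilon>) sequentially"
proof -
  define a where "a = - B - 1"
  define M where "M = 2 * B + 2"
  have B0: "B \<ge> 0" using B[of undefined] by simp
  have M0: "M > 0" using B0 by (simp add: M_def)
  obtain n0 :: nat where n0: "2 * M / \<epsilon> < n0" using reals_Archimedean2 by blast
  define k where "k = n0"
  have k0: "k > 0" using n0 M0 \<epsilon> unfolding k_def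
    by (metis divide_pos_pos less_trans of_nat_0_less_iff zero_less_mult_iff zero_less_numeral)
  have Mk: "M / real k < \<epsilon> / 2"
    using n0 k0 \<epsilon> M0 by (simp add: k_def field_simps)
  define T where "T j = {x. a + real j * M / real k < g x}" for j :: nat
  have openT: "open (T j)" for j
    unfolding T_def by (rule open_Collect_less[where f="\<lambda>_. _"]) (auto intro: g continuous_intros)
  define \<delta> where "\<delta> = \<epsilon> / (2 * M)"
  have \<delta>: "\<delta> > 0" using \<epsilon> M0 by (simp add: \<delta>_def)
  have "eventually (\<lambda>n. \<forall>j\<in>{1..k}. measure (\<nu>s n) (T j) > measure \<nu> (T j) - \<delta>) sequentially"
    by (intro eventually_ball_finite ballI opn openT \<delta>) simp
  then show ?thesis
  proof (rule eventually_mono)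
    fix n assume H: "\<forall>j\<in>{1..k}. measure (\<nu>s n) (T j) > measure \<nu> (T j) - \<delta>"
    have "(\<Sum>j\<in>{1..k}. measure \<nu> (T j) - \<delta>) < (\<Sum>j\<in>{1..k}. measure (\<nu>s n) (T j))"
      using H k0 by (intro sum_strict_mono) auto
    then have s: "(\<Sum>j\<in>{1..k}. measure \<nu> (T j)) - k * \<delta> < (\<Sum>j\<in>{1..k}. measure (\<nu>s n) (T j))"
      by (simp add: sum_subtractf)
    have s2: "M / real k * ((\<Sum>j\<in>{1..k}. measure \<nu> (T j)) - k * \<delta>) < M / real k * (\<Sum>j\<in>{1..k}. measure (\<nu>s n) (T j))"
      using s M0 k0 by (intro mult_strict_left_mono) auto
    have e: "M / real k * (k * \<delta>) = \<epsilon> / 2" using k0 M0 by (simp add: \<delta>_def field_simps)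
    have u: "(\<integral>x. g x \<partial>\<nu>) - a \<le> M / real k * (\<Sum>j\<in>{1..k}. measure \<nu> (T j)) + M / real k"
      using layer_bounds(2)[OF pr g B k0] unfolding T_def a_def M_def .
    have l: "M / real k * (\<Sum>j\<in>{1..k}. measure (\<nu>s n) (T j)) \<le> (\<integral>x. g x \<partial>\<nu>s n) - a"
      using layer_bounds(1)[OF probs g B k0] unfolding T_def a_def M_def .
    show "(\<integral>x. g x \<partial>\<nu>s n) > (\<integral>x. g x \<partial>\<nu>) - \<epsilon>"
    proof -
      have s3: "M / real k * (\<Sum>j\<in>{1..k}. measure \<nu> (T j)) - \<epsilon> / 2 < M / real k * (\<Sum>j\<in>{1..k}. measure (\<nu>s n) (T j))"
        using s2 unfolding right_diff_distrib e .
      show ?thesis using u l s3 Mk by linarith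
    qed
  qed
qed

lemma weak_conv_from_open:
  fixes \<nu>s :: "nat \<Rightarrow> 'x::topological_space measure"
  assumes probs: "\<And>n. prob_space (\<nu>s n)" "\<And>n. sets (\<nu>s n) = sets borel"
    and pr: "prob_space \<nu>" "sets \<nu> = sets borel"
    and opn: "\<And>U e. open U \<Longrightarrow> e > 0 \<Longrightarrow> eventually (\<lambda>n. measure (\<nu>s n) U > measure \<nu> U - e) sequentially"
  shows "weak_conv_seq \<nu>s \<nu>"
  unfolding weak_conv_seq_def
proof (intro allI impI)
  fix f :: "'x \<Rightarrow> real" assume f: "continuous_on UNIV f \<and> bounded (range f)"
  then obtain B where B: "\<And>x. \<bar>f x\<bar> \<le> B" by (auto simp: bounded_iff)
  have f2: "continuous_on UNIV (\<lambda>x. - f x)" using f by (auto intro: continuous_intros)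
  show "(\<lambda>n. \<integral>x. f x \<partial>\<nu>s n) \<longlonglongrightarrow> (\<integral>x. f x \<partial>\<nu>)"
    unfolding tendsto_iff
  proof (intro allI impI)
    fix r :: real assume r: "r > 0"
    have e1: "eventually (\<lambda>n. (\<integral>x. f x \<partial>\<nu>s n) > (\<integral>x. f x \<partial>\<nu>) - r) sequentially"
      using f B r by (intro lower_conv[OF probs pr opn]) auto
    have e2: "eventually (\<lambda>n. (\<integral>x. - f x \<partial>\<nu>s n) > (\<integral>x. - f x \<partial>\<nu>) - r) sequentially"
      using f2 B r by (intro lower_conv[OF probs pr opn, of _ B]) auto
    show "eventually (\<lambda>n. dist (\<integral>x. f x \<partial>\<nu>s n) (\<integral>x. f x \<partial>\<nu>) < r) sequentially"
      using eventually_conj[OF e1 e2]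
      by (rule eventually_mono) (auto simp: dist_real_def abs_less_iff)
  qed
qed



lemma open_approx:
  obtains \<V> :: "'x::second_countable_topology set set" where "countable \<V>" "\<And>V. V \<in> \<V> \<Longrightarrow> open V"
    "\<And>\<mu> U e. finite_measure \<mu> \<Longrightarrow> sets \<mu> = sets borel \<Longrightarrow> open U \<Longrightarrow> e > 0 \<Longrightarrow>
        \<exists>V\<in>\<V>. V \<subseteq> U \<and> measure \<mu> V > measure \<mu> U - e"
proof -
  obtain B :: "'x set set" where B: "countable B" "topological_basis B"
    using ex_countable_basis by blast
  define \<V> where "\<V> = Union ` {F. finite F \<and> F \<subseteq> B}"
  have "countable \<V>" unfolding \<V>_def by (intro countable_image countable_Collect_finite_subset B)
  moreover have opV: "open V" if "V \<in> \<V>" for V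
    using that B(2) unfolding \<V>_def topological_basis_def by (auto intro!: open_Union)
  moreover have "\<exists>V\<in>\<V>. V \<subseteq> U \<and> measure \<mu> V > measure \<mu> U - e"
    if fm: "finite_measure \<mu>" and sm: "sets \<mu> = sets borel" and U: "open U" and e: "e > 0" for \<mu> U e
  proof -
    interpret finite_measure \<mu> by (rule fm)
    obtain B' where B': "B' \<subseteq> B" "\<Union>B' = U" using B(2) U unfolding topological_basis_def by blast
    have cB': "countable B'" using B' B(1) countable_subset by blast
    show ?thesis
    proof (cases "B' = {}")
      case True
      have "{} \<in> \<V>" unfolding \<V>_def by (rule image_eqI[of _ _ "{}"]) auto
      moreover have "U = {}" using B' True by simp
      ultimately
      show ?thesis using e by (intro bexI[of _ "{}"]) auto
    next
      case False
      define W where "W n = \<Union>(from_nat_into B' ` {..n})" for n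
      have WV: "W n \<in> \<V>" for n
        unfolding \<V>_def W_def by (rule imageI) (use from_nat_into[of B'] False B' in blast)
      have WU: "W n \<subseteq> U" for n
        unfolding W_def using from_nat_into[of B'] False B' by blast
      have oW: "open (W n)" for n using WV[of n] by (rule opV)
      have "W n \<in> sets \<mu>" for n using oW[of n] sm by (simp add: borel_open)
      then have Wm: "range W \<subseteq> sets \<mu>" by (simp add: image_subset_iff)
      have inc: "incseq W" unfolding W_def incseq_def by (intro allI impI Union_mono image_mono) auto
      have "(\<Union>n. W n) = U"
      proof -
        have "(\<Union>n. W n) = \<Union>(range (from_nat_into B'))" unfolding W_def by blast
        then show ?thesis using range_from_nat_into[OF False cB'] B' by simp
      qed
      then have "(\<lambda>n. measure \<mu> (W n)) \<longlonglongrightarrow> measure \<mu> U"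
        using finite_Lim_measure_incseq[OF Wm inc] by simp
      then have "eventually (\<lambda>n. measure \<mu> (W n) > measure \<mu> U - e) sequentially"
        using e by (simp add: order_tendstoD(1))
      then obtain n where "measure \<mu> (W n) > measure \<mu> U - e"
        by (auto simp: eventually_sequentially)
      then show ?thesis using WV WU by blast
    qed
  qed
  ultimately show ?thesis by (rule that)
qed


lemma length_filter_map_upt:
  "real (length (filter (\<lambda>x. x \<in> V) (map \<omega> [0..<N]))) = (\<Sum>i<N. indicator V (\<omega> i))"
  by (induction N) (auto simp: indicator_def)

lemma measure_emp:
  assumes "N > 0" and Vb: "V \<in> sets borel"
  shows "measure (emp (map \<omega> [0..<N])) V = (\<Sum>i<N. indicator V (\<omega> i)) / real N"
proof -
  let ?xs = "map \<omega> [0..<N]"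
  have "?xs \<noteq> []" using assms by simp
  then have ne: "mset ?xs \<noteq> {#}" by (metis mset_zero_iff)
  have "measure (emp ?xs) V = measure (measure_pmf (pmf_of_multiset (mset ?xs))) V"
    using Vb unfolding emp_def by (subst measure_distr) auto
  also have "\<dots> = size (filter_mset (\<lambda>x. x \<in> V) (mset ?xs)) / size (mset ?xs)"
    by (rule measure_pmf_of_multiset[OF ne])
  finally have eq1: "measure (emp ?xs) V = size (filter_mset (\<lambda>x. x \<in> V) (mset ?xs)) / size (mset ?xs)" .
  have A: "size (filter_mset (\<lambda>x. x \<in> V) (mset ?xs)) = length (filter (\<lambda>x. x \<in> V) ?xs)"
    by (simp only: mset_filter[symmetric] size_mset)
  have B: "size (mset ?xs) = N" by simp
  show ?thesis unfolding eq1 A B length_filter_map_upt ..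
qed

lemma ae_emp_weak:
  fixes \<mu> :: "'x::{metric_space, second_countable_topology} measure"
  assumes mu: "prob_space \<mu>" "sets \<mu> = sets borel"
  shows "AE \<omega> in PiM UNIV (\<lambda>_::nat. \<mu>). \<forall>N0>0. weak_conv_seq (\<lambda>n. emp (map \<omega> [0..<n + N0])) \<mu>"
proof -
  obtain \<V> :: "'x set set" where cV: "countable \<V>" and oV: "\<And>V. V \<in> \<V> \<Longrightarrow> open V"
    and apx: "\<And>\<mu> U e. finite_measure \<mu> \<Longrightarrow> sets \<mu> = sets borel \<Longrightarrow> open U \<Longrightarrow> e > 0 \<Longrightarrow>
        \<exists>V\<in>\<V>. V \<subseteq> U \<and> measure \<mu> V > measure \<mu> U - e"
    by (rule open_approx) blast
  interpret prob_space \<mu> by (rule mu)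
  have "AE \<omega> in PiM UNIV (\<lambda>_::nat. \<mu>). \<forall>V\<in>\<V>.
           (\<lambda>N. (\<Sum>i<N. indicator V (\<omega> i)) / real N) \<longlonglongrightarrow> measure \<mu> V"
    using cV oV mu(2) by (subst AE_ball_countable) (auto intro!: slln_indicator mu)
  then show ?thesis
  proof (rule AE_mp, intro AE_I2 impI allI)
    fix \<omega> :: "nat \<Rightarrow> 'x" and N0 :: nat
    assume conv: "\<forall>V\<in>\<V>. (\<lambda>N. (\<Sum>i<N. indicator V (\<omega> i)) / real N) \<longlonglongrightarrow> measure \<mu> V"
    assume N0: "N0 > 0"
    show "weak_conv_seq (\<lambda>n. emp (map \<omega> [0..<n + N0])) \<mu>"
    proof -
      have ne: "map \<omega> [0..<n + N0] \<noteq> []" for n using N0 by simp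
      show "weak_conv_seq (\<lambda>n. emp (map \<omega> [0..<n + N0])) \<mu>"
      proof (rule weak_conv_from_open)
        show "prob_space (emp (map \<omega> [0..<n + N0]))" for n using emp_basic(1)[OF ne] .
        show "sets (emp (map \<omega> [0..<n + N0])) = sets borel" for n using emp_basic(2)[OF ne] .
        show "prob_space \<mu>" "sets \<mu> = sets borel" using mu by auto
        fix U :: "'x set" and e :: real assume U: "open U" and e: "e > 0"
        obtain V where V: "V \<in> \<V>" "V \<subseteq> U" "measure \<mu> V > measure \<mu> U - e / 2"
          using apx[of \<mu> U "e / 2"] U e mu(2) prob_space_axioms
          by (auto simp: prob_space_def)
        have "eventually (\<lambda>N. (\<Sum>i<N. indicator V (\<omega> i)) / real N > measure \<mu> V - e / 2) sequentially"
          using conv V(1) e by (intro order_tendstoD(1)) auto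
        then have ev: "eventually (\<lambda>n. (\<Sum>i<n + N0. indicator V (\<omega> i)) / real (n + N0) > measure \<mu> V - e / 2) sequentially"
          by (subst eventually_sequentially_seg[where P = "\<lambda>N. (\<Sum>i<N. indicator V (\<omega> i)) / real N > measure \<mu> V - e / 2"])
        show "eventually (\<lambda>n. measure (emp (map \<omega> [0..<n + N0])) U > measure \<mu> U - e) sequentially"
          using ev
        proof (rule eventually_mono)
          fix n assume H: "(\<Sum>i<n + N0. indicator V (\<omega> i)) / real (n + N0) > measure \<mu> V - e / 2"
          interpret E: prob_space "emp (map \<omega> [0..<n + N0])" using emp_basic(1)[OF ne] .
          have "measure (emp (map \<omega> [0..<n + N0])) V \<le> measure (emp (map \<omega> [0..<n + N0])) U"
            using V(2) U emp_basic(2)[OF ne] by (intro E.finite_measure_mono) auto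
          moreover have "measure (emp (map \<omega> [0..<n + N0])) V = (\<Sum>i<n + N0. indicator V (\<omega> i)) / real (n + N0)"
            using N0 oV[OF V(1)] by (intro measure_emp) auto
          ultimately show "measure (emp (map \<omega> [0..<n + N0])) U > measure \<mu> U - e"
            using H V(3) by linarith
        qed
      qed
    qed
  qed
qed

theorem proposition4p3:
  fixes MY :: "'y measure"
    and K :: "'x::{metric_space, second_countable_topology} \<Rightarrow> 'y measure"
    and acc :: "'x measure \<Rightarrow> bool"
    and \<theta> :: "('y \<times> 'x) measure \<Rightarrow> 'b::real_normed_vector"
    and PX :: "'x measure"
  assumes kernel: "K \<in> borel \<rightarrow>\<^sub>M prob_algebra MY"
    and acc_distr: "\<And>\<mu>. acc \<mu> \<Longrightarrow> prob_space \<mu> \<and> sets \<mu> = sets borel"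
    and standing: "\<And>\<mu>. acc \<mu> \<Longrightarrow>
        (AE \<omega> in PiM UNIV (\<lambda>_::nat. \<mu>). eventually (\<lambda>N. acc (emp (map \<omega> [0..<N]))) sequentially)"
    and cont: "\<And>\<mu>s \<mu>. (\<forall>n. acc (\<mu>s n)) \<Longrightarrow> acc \<mu> \<Longrightarrow> weak_conv_seq \<mu>s \<mu> \<Longrightarrow>
        (\<lambda>n. \<theta> (joint MY K (\<mu>s n))) \<longlonglongrightarrow> \<theta> (joint MY K \<mu>)"
    and PX: "acc PX"
  shows "well_specified \<theta> MY K acc \<longleftrightarrow>
    (\<forall>xs. xs \<noteq> [] \<longrightarrow> acc (emp xs) \<longrightarrow> \<theta> (joint MY K (emp xs)) - \<theta> (joint MY K PX) = 0)"
proof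
  assume ws: "well_specified \<theta> MY K acc"
  show "\<forall>xs. xs \<noteq> [] \<longrightarrow> acc (emp xs) \<longrightarrow> \<theta> (joint MY K (emp xs)) - \<theta> (joint MY K PX) = 0"
  proof (intro allI impI)
    fix xs :: "'x list" assume "xs \<noteq> []" "acc (emp xs)"
    then have "\<theta> (joint MY K (emp xs)) = \<theta> (joint MY K PX)"
      using ws PX unfolding well_specified_def by blast
    then show "\<theta> (joint MY K (emp xs)) - \<theta> (joint MY K PX) = 0" by simp
  qed
next
  assume H: "\<forall>xs. xs \<noteq> [] \<longrightarrow> acc (emp xs) \<longrightarrow> \<theta> (joint MY K (emp xs)) - \<theta> (joint MY K PX) = 0"
  have key: "\<theta> (joint MY K \<mu>) = \<theta> (joint MY K PX)" if acc\<mu>: "acc \<mu>" for \<mu>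
  proof -
    have mu: "prob_space \<mu>" "sets \<mu> = sets borel" using acc_distr[OF acc\<mu>] by auto
    interpret P: prob_space "PiM UNIV (\<lambda>_::nat. \<mu>)" by (rule prob_space_PiM) (use mu in auto)
    have "AE \<omega> in PiM UNIV (\<lambda>_::nat. \<mu>). eventually (\<lambda>N. acc (emp (map \<omega> [0..<N]))) sequentially
            \<and> (\<forall>N0>0. weak_conv_seq (\<lambda>n. emp (map \<omega> [0..<n + N0])) \<mu>)"
      using standing[OF acc\<mu>] ae_emp_weak[OF mu] by (rule eventually_conj)
    note ae = this
    have "\<exists>\<omega>. eventually (\<lambda>N. acc (emp (map \<omega> [0..<N]))) sequentially
            \<and> (\<forall>N0>0. weak_conv_seq (\<lambda>n. emp (map \<omega> [0..<n + N0])) \<mu>)"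
    proof (rule ccontr)
      assume a: "\<not> ?thesis"
      from ae have "AE \<omega> in PiM UNIV (\<lambda>_::nat. \<mu>). False"
        by (rule eventually_mono) (use a in blast)
      then show False by simp
    qed
    then obtain \<omega> where \<omega>: "eventually (\<lambda>N. acc (emp (map \<omega> [0..<N]))) sequentially"
        "\<forall>N0>0. weak_conv_seq (\<lambda>n. emp (map \<omega> [0..<n + N0])) \<mu>"
      by blast
    obtain N1 where N1: "\<And>N. N \<ge> N1 \<Longrightarrow> acc (emp (map \<omega> [0..<N]))"
      using \<omega>(1) by (auto simp: eventually_sequentially)
    define \<mu>s where "\<mu>s n = emp (map \<omega> [0..<n + Suc N1])" for n
    have accs: "\<forall>n. acc (\<mu>s n)" unfolding \<mu>s_def by (intro allI N1) simp
    have wc: "weak_conv_seq \<mu>s \<mu>" using \<omega>(2) unfolding \<mu>s_def by blast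
    have lim: "(\<lambda>n. \<theta> (joint MY K (\<mu>s n))) \<longlonglongrightarrow> \<theta> (joint MY K \<mu>)"
      by (rule cont[OF accs acc\<mu> wc])
    have "\<theta> (joint MY K (\<mu>s n)) = \<theta> (joint MY K PX)" for n
    proof -
      have "map \<omega> [0..<n + Suc N1] \<noteq> []" by simp
      moreover have "acc (emp (map \<omega> [0..<n + Suc N1]))" using accs unfolding \<mu>s_def by blast
      ultimately have "\<theta> (joint MY K (emp (map \<omega> [0..<n + Suc N1]))) - \<theta> (joint MY K PX) = 0"
        using H by blast
      then show ?thesis unfolding \<mu>s_def by simp
    qed
    then have "(\<lambda>n. \<theta> (joint MY K (\<mu>s n))) \<longlonglongrightarrow> \<theta> (joint MY K PX)" by simp
    from LIMSEQ_unique[OF this lim] show ?thesis by simp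
  qed
  show "well_specified \<theta> MY K acc"
    unfolding well_specified_def
  proof (intro allI impI)
    fix P1 P2 assume a1: "acc P1" and a2: "acc P2"
    from key[OF a1] key[OF a2] show "\<theta> (joint MY K P1) = \<theta> (joint MY K P2)"
      by (simp only:)
  qed
qed



end
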